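(* Let $K\ge 1$ and $T\ge 2$ be integers and let $a_1,\dots,a_{T-1}$ be binary sequences of period $K$. Define $s=I(0_K,a_1,\dots,a_{T-1})$ and $s'=I(1_K,a_1,\dots,a_{T-1})$, binary sequences of period $KT$. Let $0\le\tau<KT$ with $\tau=\tau_1T+\tau_2$, where $1\le\tau_2\le T-1$. Then $$R_{s',s}(\tau)=R_{s,s'}(\tau)\iff d(a_{T-\tau_2})=d(a_{\tau_2}),$$ and $$R_s(\tau)=R_{s'}(\tau)\iff d(a_{T-\tau_2})=-d(a_{\tau_2}).$$
   Context: A binary sequence of period $n$ is a map $\mathbb{Z}\to\{0,1\}$ with period $n$. For binary sequences $a,b$ of period $n$, $R_{a,b}(\tau)=\sum_{t=0}^{n-1}(-1)^{a(t)+b(t+\tau)}$ (indices mod $n$), and $R_a=R_{a,a}$. For binary sequences $b_0,\dots,b_{T-1}$ of period $K$, $I(b_0,\dots,b_{T-1})$ is the binary sequence $v$ of period $KT$ with $v(iT+j)=b_j(i)$ for $0\le i\le K-1$, $0\le j\le T-1$. $0_K$, $1_K$ are the all-zero and all-one sequences of period $K$. For a binary sequence $a$ of period $K$, $d(a)=2|\{0\le t\le K-1:a(t)=1\}|-K$. *)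

theory Defs
  imports Main
begin

definition binary_seq :: "nat \<Rightarrow> (int \<Rightarrow> int) \<Rightarrow> bool" where
  "binary_seq n a \<longleftrightarrow> (\<forall>t. a t \<in> {0, 1}) \<and> (\<forall>t. a (t + int n) = a t)"

definition corr :: "nat \<Rightarrow> (int \<Rightarrow> int) \<Rightarrow> (int \<Rightarrow> int) \<Rightarrow> int \<Rightarrow> int" where
  "corr n a b \<tau> = (\<Sum>t\<in>{0..<int n}. (-1) ^ nat (a t + b ((t + \<tau>) mod int n)))"

text \<open>Interleaving I(b_0,...,b_{T-1}): v(iT+j) = b_j(i).\<close>
definition interleave :: "nat \<Rightarrow> nat \<Rightarrow> (nat \<Rightarrow> int \<Rightarrow> int) \<Rightarrow> int \<Rightarrow> int" where
  "interleave K T b m = b (nat (m mod int T)) ((m div int T) mod int K)"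

definition zero_seq :: "int \<Rightarrow> int" where "zero_seq = (\<lambda>_. 0)"
definition one_seq :: "int \<Rightarrow> int" where "one_seq = (\<lambda>_. 1)"

definition dbal :: "nat \<Rightarrow> (int \<Rightarrow> int) \<Rightarrow> int" where
  "dbal K a = 2 * int (card {t \<in> {0..<int K}. a t = 1}) - int K"

end

theory Submission imports Defs begin

lemma sum_decomp:
  fixes K T :: nat assumes "T > 0"
  shows "(\<Sum>t\<in>{0..<int K * int T}. f t) = (\<Sum>r\<in>{0..<int T}. \<Sum>i\<in>{0..<int K}. f (i*int T + r))"
proof -
  have bij: "bij_betw (\<lambda>(r,i). i*int T + r) ({0..<int T} \<times> {0..<int K}) {0..<int K * int T}"
  proof (rule bij_betw_byWitness[where f'="\<lambda>t. (t mod int T, t div int T)"])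
    show "\<forall>x\<in>{0..<int T} \<times> {0..<int K}. (\<lambda>t. (t mod int T, t div int T)) ((\<lambda>(r,i). i*int T + r) x) = x"
      using assms by auto
    show "\<forall>y\<in>{0..<int K * int T}. (\<lambda>(r,i). i*int T + r) ((\<lambda>t. (t mod int T, t div int T)) y) = y"
      by auto
    show "(\<lambda>(r,i). i*int T + r) ` ({0..<int T} \<times> {0..<int K}) \<subseteq> {0..<int K * int T}"
    proof (rule image_subsetI, clarify)
      fix r i assume h: "r \<in> {0..<int T}" "i \<in> {0..<int K}"
      have "i*int T + r < i * int T + int T" using h by simp
      also have "\<dots> = (i+1) * int T" by (simp add: algebra_simps)
      also have "\<dots> \<le> int K * int T" using h by (intro mult_right_mono) auto
      finally show "i*int T + r \<in> {0..<int K * int T}" using h by auto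
    qed
    show "(\<lambda>t. (t mod int T, t div int T)) ` {0..<int K * int T} \<subseteq> {0..<int T} \<times> {0..<int K}"
    proof safe
      fix t assume h: "t \<in> {0..<int K * int T}"
      show "t mod int T \<in> {0..<int T}" using assms by simp
      have "t div int T < int K" using h assms
        by (smt (verit, ccfv_SIG) div_minus_minus div_mult_self3 minus_mult_minus
    neg_imp_zdiv_neg_iff of_nat_0 of_nat_less_iff atLeastLessThan_iff)
      moreover have "0 \<le> t div int T" using h assms by (simp add: pos_imp_zdiv_nonneg_iff)
      ultimately show "t div int T \<in> {0..<int K}" by auto
    qed
  qed
  have "(\<Sum>r\<in>{0..<int T}. \<Sum>i\<in>{0..<int K}. f (i*int T + r)) = (\<Sum>x\<in>{0..<int T} \<times> {0..<int K}. f ((\<lambda>(r,i). i*int T + r) x))"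
    by (simp add: sum.cartesian_product case_prod_beta)
  also have "\<dots> = (\<Sum>t\<in>{0..<int K * int T}. f t)"
    using sum.reindex_bij_betw[OF bij] .
  finally show ?thesis by simp
qed

lemma shift_sum:
  fixes K :: nat assumes "K > 0"
  shows "(\<Sum>i\<in>{0..<int K}. h ((i + c) mod int K)) = (\<Sum>i\<in>{0..<int K}. h i)"
proof -
  have "bij_betw (\<lambda>i. (i + c) mod int K) {0..<int K} {0..<int K}"
    by (rule bij_betw_byWitness[where f'="\<lambda>i. (i - c) mod int K"])
       (use assms in \<open>auto simp: mod_simps\<close>)
  from sum.reindex_bij_betw[OF this] show ?thesis .
qed

lemma interleave_mod:
  assumes "K > 0" "T > 0"
  shows "interleave K T b (m mod (int K * int T)) = interleave K T b m"
proof -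
  have "m mod (int T * int K) = int T * (m div int T mod int K) + m mod int T"
    using assms by (simp add: zmod_zmult2_eq)
  then have e: "m mod (int K * int T) = int T * (m div int T mod int K) + m mod int T"
    by (simp add: mult.commute)
  show ?thesis unfolding interleave_def e using assms by simp
qed

lemma sum_sign:
  assumes "\<And>t. b t \<in> {0,1}"
  shows "(\<Sum>i\<in>{0..<int K}. (-1::int) ^ nat (b i)) = - dbal K b"
proof -
  have "(\<Sum>i\<in>{0..<int K}. (-1::int) ^ nat (b i)) = (\<Sum>i\<in>{0..<int K}. 1 - 2 * (if b i = 1 then 1 else 0))"
    apply (rule sum.cong, simp)
    subgoal for i using assms[of i] by auto
    done
  also have "\<dots> = int K - 2 * int (card {t \<in> {0..<int K}. b t = 1})"
    by (simp add: sum_subtractf sum.If_cases sum_distrib_left[symmetric] Int_def conj_commute)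
  finally show ?thesis unfolding dbal_def by simp
qed

lemma il_ne0:
  assumes "T > 0" "m mod int T \<noteq> 0"
  shows "interleave K T (a(0:=f)) m = interleave K T (a(0:=g)) m"
proof -
  have "m mod int T \<ge> 0" using assms by simp
  then have "nat (m mod int T) \<noteq> 0" using assms by linarith
  then show ?thesis unfolding interleave_def by simp
qed

lemma divmod_triv:
  fixes q r d :: int assumes "0 \<le> r" "r < d"
  shows "(q*d + r) div d = q" "(q*d + r) mod d = r"
  using assms by simp_all

lemma sign_split:
  fixes c x :: int assumes "c \<in> {0,1}" "x \<in> {0,1}"
  shows "(-1::int) ^ nat (c + x) = (-1) ^ nat c * (-1) ^ nat x"
  using assms by auto

lemma main_formula:
  fixes K T :: nat and a :: "nat \<Rightarrow> int \<Rightarrow> int" and \<tau> \<tau>1 \<tau>2 c0 c1 :: int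
  assumes K: "K \<ge> 1" and T: "T \<ge> 2"
    and bin: "\<And>j t. 1 \<le> j \<Longrightarrow> j \<le> T - 1 \<Longrightarrow> a j t \<in> {0,1}"
    and tau: "\<tau> = \<tau>1 * int T + \<tau>2" and t2: "1 \<le> \<tau>2" "\<tau>2 \<le> int T - 1"
    and c0: "c0 \<in> {0,1}" and c1: "c1 \<in> {0,1}"
  defines "s \<equiv> \<lambda>c. interleave K T (a(0 := (\<lambda>_. c)))"
  defines "G \<equiv> \<lambda>c0 c1 r. (\<Sum>i\<in>{0..<int K}. (-1::int) ^ nat (s c0 (i * int T + r) + s c1 (i * int T + r + \<tau>)))"
  shows "corr (K * T) (s c0) (s c1) \<tau> =
    (\<Sum>r\<in>{0..<int T} - {0, int T - \<tau>2}. G 0 0 r)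
    + (-1) ^ nat c0 * (- dbal K (a (nat \<tau>2))) + (-1) ^ nat c1 * (- dbal K (a (T - nat \<tau>2)))"
proof -
  have Kp: "K > 0" and Tp: "T > 0" using K T by auto
  have t2l: "0 \<le> \<tau>2" "\<tau>2 < int T" using t2 by auto
  have bin1: "a (nat \<tau>2) t \<in> {0,1}" for t using bin[of "nat \<tau>2" t] t2 by linarith
  have bin2: "a (T - nat \<tau>2) t \<in> {0,1}" for t using bin[of "T - nat \<tau>2" t] t2 by linarith
  have "corr (K * T) (s c0) (s c1) \<tau> =
      (\<Sum>t\<in>{0..<int K * int T}. (-1) ^ nat (s c0 t + s c1 ((t + \<tau>) mod (int K * int T))))"
    unfolding corr_def by simp
  also have "\<dots> = (\<Sum>t\<in>{0..<int K * int T}. (-1) ^ nat (s c0 t + s c1 (t + \<tau>)))"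
    unfolding s_def using interleave_mod[OF Kp Tp] by simp
  also have "\<dots> = (\<Sum>r\<in>{0..<int T}. G c0 c1 r)"
    unfolding G_def by (subst sum_decomp[OF Tp]) simp
  finally have E: "corr (K * T) (s c0) (s c1) \<tau> = (\<Sum>r\<in>{0..<int T}. G c0 c1 r)" .
  have G0: "G c0 c1 0 = (-1) ^ nat c0 * (- dbal K (a (nat \<tau>2)))"
  proof -
    have "G c0 c1 0 = (\<Sum>i\<in>{0..<int K}. (-1) ^ nat c0 * (-1) ^ nat (a (nat \<tau>2) ((i + \<tau>1) mod int K)))"
      unfolding G_def
    proof (rule sum.cong[OF refl])
      fix i
      have e1: "s c0 (i * int T + 0) = c0" unfolding s_def interleave_def by simp
      have x: "i * int T + 0 + \<tau> = (i + \<tau>1) * int T + \<tau>2" using tau by (simp add: algebra_simps)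
      have "nat \<tau>2 \<noteq> 0" using t2 by simp
      then have e2: "s c1 (i * int T + 0 + \<tau>) = a (nat \<tau>2) ((i + \<tau>1) mod int K)"
        unfolding s_def interleave_def x divmod_triv[where q="i + \<tau>1" and r=\<tau>2 and d="int T", OF t2l] using t2 by simp
      show "(-1::int) ^ nat (s c0 (i * int T + 0) + s c1 (i * int T + 0 + \<tau>)) = (-1) ^ nat c0 * (-1) ^ nat (a (nat \<tau>2) ((i + \<tau>1) mod int K))"
        unfolding e1 e2 using c0 bin1[of "(i + \<tau>1) mod int K"] by auto
    qed
    also have "\<dots> = (-1) ^ nat c0 * (\<Sum>i\<in>{0..<int K}. (-1) ^ nat (a (nat \<tau>2) i))"
      unfolding sum_distrib_left[symmetric]
      using shift_sum[OF Kp, where h="\<lambda>x. (-1::int) ^ nat (a (nat \<tau>2) x)" and c=\<tau>1] by simp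
    finally show ?thesis using sum_sign[OF bin1] by simp
  qed
  have G1: "G c0 c1 (int T - \<tau>2) = (-1) ^ nat c1 * (- dbal K (a (T - nat \<tau>2)))"
  proof -
    have "G c0 c1 (int T - \<tau>2) = (\<Sum>i\<in>{0..<int K}. (-1) ^ nat c1 * (-1) ^ nat (a (T - nat \<tau>2) i))"
      unfolding G_def
    proof (rule sum.cong[OF refl])
      fix i assume i: "i \<in> {0..<int K}"
      have t3: "0 \<le> int T - \<tau>2" "int T - \<tau>2 < int T" using t2 by auto
      have n: "nat (int T - \<tau>2) = T - nat \<tau>2" using t2 by linarith
      have "T - nat \<tau>2 \<noteq> 0" using t2 by linarith
      then have e1: "s c0 (i * int T + (int T - \<tau>2)) = a (T - nat \<tau>2) i"
        unfolding s_def interleave_def divmod_triv[where q=i and r="int T - \<tau>2" and d="int T", OF t3] n using i by simp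
      have x: "i * int T + (int T - \<tau>2) + \<tau> = (i + 1 + \<tau>1) * int T" using tau by (simp add: algebra_simps)
      have e2: "s c1 (i * int T + (int T - \<tau>2) + \<tau>) = c1"
        unfolding s_def interleave_def x by simp
      show "(-1::int) ^ nat (s c0 (i * int T + (int T - \<tau>2)) + s c1 (i * int T + (int T - \<tau>2) + \<tau>)) = (-1) ^ nat c1 * (-1) ^ nat (a (T - nat \<tau>2) i)"
        unfolding e1 e2 using c1 bin2[of i] by auto
    qed
    also have "\<dots> = (-1) ^ nat c1 * (\<Sum>i\<in>{0..<int K}. (-1) ^ nat (a (T - nat \<tau>2) i))"
      by (simp add: sum_distrib_left)
    finally show ?thesis using sum_sign[OF bin2] by simp
  qed
  have G2: "G c0 c1 r = G 0 0 r" if r: "r \<in> {0..<int T} - {0, int T - \<tau>2}" for r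
    unfolding G_def
  proof (rule sum.cong[OF refl])
    fix i
    have m1: "(i * int T + r) mod int T \<noteq> 0" using r by simp
    have "(r + \<tau>2) mod int T \<noteq> 0"
    proof (cases "r + \<tau>2 < int T")
      case True then show ?thesis using r t2 by simp
    next
      case False
      have "(r + \<tau>2) mod int T = (r + \<tau>2 - int T) mod int T" by (simp add: mod_diff_right_eq[symmetric])
      also have "\<dots> = r + \<tau>2 - int T" using False r t2 by (intro mod_pos_pos_trivial) auto
      finally show ?thesis using r False by auto
    qed
    moreover have "(i * int T + r + \<tau>) mod int T = (r + \<tau>2) mod int T"
    proof -
      have "i * int T + r + \<tau> = (r + \<tau>2) + (i + \<tau>1) * int T" using tau by (simp add: algebra_simps)
      then show ?thesis by (simp only: mod_mult_self1)
    qed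
    ultimately have m2: "(i * int T + r + \<tau>) mod int T \<noteq> 0" by simp
    show "(-1::int) ^ nat (s c0 (i * int T + r) + s c1 (i * int T + r + \<tau>)) = (-1) ^ nat (s 0 (i * int T + r) + s 0 (i * int T + r + \<tau>))"
      unfolding s_def using il_ne0[OF Tp m1] il_ne0[OF Tp m2] by metis
  qed
  have fin: "finite ({0..<int T})" by simp
  have in0: "0 \<in> {0..<int T}" using Tp by simp
  have in1: "int T - \<tau>2 \<in> {0..<int T} - {0}" using t2 by auto
  have "(\<Sum>r\<in>{0..<int T}. G c0 c1 r) = G c0 c1 0 + (G c0 c1 (int T - \<tau>2) + (\<Sum>r\<in>{0..<int T} - {0} - {int T - \<tau>2}. G c0 c1 r))"
  proof -
    have "(\<Sum>r\<in>{0..<int T}. G c0 c1 r) = G c0 c1 0 + (\<Sum>r\<in>{0..<int T} - {0}. G c0 c1 r)"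
      by (rule sum.remove[OF fin in0])
    also have "(\<Sum>r\<in>{0..<int T} - {0}. G c0 c1 r) = G c0 c1 (int T - \<tau>2) + (\<Sum>r\<in>{0..<int T} - {0} - {int T - \<tau>2}. G c0 c1 r)"
      by (rule sum.remove[OF _ in1]) simp
    finally show ?thesis .
  qed
  also have "{0..<int T} - {0} - {int T - \<tau>2} = {0..<int T} - {0, int T - \<tau>2}" by auto
  also have "(\<Sum>r\<in>{0..<int T} - {0, int T - \<tau>2}. G c0 c1 r) = (\<Sum>r\<in>{0..<int T} - {0, int T - \<tau>2}. G 0 0 r)"
    using G2 by (rule sum.cong[OF refl])
  finally show ?thesis using E G0 G1 by simp
qed

theorem corollary1:
  fixes K T :: nat and a :: "nat \<Rightarrow> int \<Rightarrow> int" and \<tau> \<tau>1 \<tau>2 :: int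
  assumes "K \<ge> 1" and "T \<ge> 2"
    and "\<And>j. 1 \<le> j \<Longrightarrow> j \<le> T - 1 \<Longrightarrow> binary_seq K (a j)"
    and "0 \<le> \<tau>" and "\<tau> < int K * int T"
    and "\<tau> = \<tau>1 * int T + \<tau>2" and "1 \<le> \<tau>2" and "\<tau>2 \<le> int T - 1"
  shows "let s = interleave K T (a(0 := zero_seq));
             s' = interleave K T (a(0 := one_seq)) in
         (corr (K * T) s' s \<tau> = corr (K * T) s s' \<tau> \<longleftrightarrow>
            dbal K (a (T - nat \<tau>2)) = dbal K (a (nat \<tau>2))) \<and>
         (corr (K * T) s s \<tau> = corr (K * T) s' s' \<tau> \<longleftrightarrow>
            dbal K (a (T - nat \<tau>2)) = - dbal K (a (nat \<tau>2)))"
proof -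
  have bin: "\<And>j t. 1 \<le> j \<Longrightarrow> j \<le> T - 1 \<Longrightarrow> a j t \<in> {0,1}"
    using assms(3) unfolding binary_seq_def by blast
  have z: "zero_seq = (\<lambda>_. 0)" and o: "one_seq = (\<lambda>_. 1)" by (simp_all add: zero_seq_def one_seq_def)
  have i0: "(0::int) \<in> {0,1}" and i1: "(1::int) \<in> {0,1}" by simp_all
  note 10 = main_formula[of K T a \<tau> \<tau>1 \<tau>2 1 0, OF assms(1,2) bin assms(6,7,8) i1 i0]
  note 01 = main_formula[of K T a \<tau> \<tau>1 \<tau>2 0 1, OF assms(1,2) bin assms(6,7,8) i0 i1]
  note 00 = main_formula[of K T a \<tau> \<tau>1 \<tau>2 0 0, OF assms(1,2) bin assms(6,7,8) i0 i0]
  note 11 = main_formula[of K T a \<tau> \<tau>1 \<tau>2 1 1, OF assms(1,2) bin assms(6,7,8) i1 i1]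
  show ?thesis unfolding Let_def z o using 10 01 00 11 by auto
qed

end
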